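(* Let $f:\mathbb{R}^n\to\mathbb{R}$ and $g:\mathbb{R}^n\to(-\infty,\infty]$ satisfy the standing assumptions below, with $3\sigma>2L$, and let $\gamma$ satisfy \[ 0<\gamma<\frac{3\sigma-2L}{L^2}. \] Let $\{(y^t,z^t,x^t)\}$ be any sequence generated by the PR splitting iteration (defined below) from some $x^0\in\mathbb{R}^n$. Then the sequence $\{\mathcal{P}_\gamma(y^t,z^t,x^t)\}_{t\ge 1}$ is nonincreasing. Moreover, if the sequence $\{(y^t,z^t,x^t)\}$ has a cluster point $(y^*,z^*,x^* )$, then \[ \lim_{t\to\infty}\|x^{t+1}-x^t\| = 2\lim_{t\to\infty}\|z^{t+1}-y^{t+1}\| = 0, \] $z^*=y^*$, and $0\in\nabla f(z^* )+\partial g(z^* )$.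
   Context: Standing assumptions: $f:\mathbb{R}^n\to\mathbb{R}$ is differentiable and strongly convex with modulus at least $\sigma>0$ (i.e. $f-\frac{\sigma}{2}\|\cdot\|^2$ is convex), and $\nabla f$ is Lipschitz continuous with modulus at most $L>0$. The function $g:\mathbb{R}^n\to(-\infty,\infty]$ is proper and lower semicontinuous, and for the $\gamma>0$ used, the set $\operatorname{Argmin}_u\{\gamma g(u)+\frac12\|u-w\|^2\}$ is nonempty for every $w\in\mathbb{R}^n$. PR splitting iteration: given $x^0$ and $\gamma>0$, for $t=0,1,2,\dots$: $y^{t+1}=\operatorname{argmin}_y\{f(y)+\frac{1}{2\gamma}\|y-x^t\|^2\}$; $z^{t+1}\in\operatorname{Argmin}_z\{g(z)+\frac{1}{2\gamma}\|2y^{t+1}-x^t-z\|^2\}$ (any choice); $x^{t+1}=x^t+2(z^{t+1}-y^{t+1})$. Merit function: $\mathcal{P}_\gamma(y,z,x):=f(y)+g(z)-\frac{3}{2\gamma}\|y-z\|^2+\frac{1}{\gamma}\langle x-y,z-y\rangle$. $\partial g$ denotes the limiting (Mordukhovich) subdifferential: $v\in\partial g(x)$ iff there exist $x^t\to x$ with $g(x^t)\to g(x)$ and $v^t\to v$ such that $\liminf_{z\to x^t, z\neq x^t}\frac{g(z)-g(x^t)-\langle v^t,z-x^t\rangle}{\|z-x^t\|}\ge 0$ for each $t$. *)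

theory Defs
  imports "HOL-Analysis.Analysis"
begin

definition proper_fun :: "('a \<Rightarrow> ereal) \<Rightarrow> bool" where
  "proper_fun g \<longleftrightarrow> (\<forall>x. g x \<noteq> -\<infinity>) \<and> (\<exists>x. g x \<noteq> \<infinity>)"

definition lsc_fun :: "('a::topological_space \<Rightarrow> ereal) \<Rightarrow> bool" where
  "lsc_fun g \<longleftrightarrow> (\<forall>x. g x \<le> Liminf (at x) g)"

definition frechet_subgrad :: "('a::real_inner \<Rightarrow> ereal) \<Rightarrow> 'a \<Rightarrow> 'a \<Rightarrow> bool" where
  "frechet_subgrad g x v \<longleftrightarrow> \<bar>g x\<bar> \<noteq> \<infinity> \<and>
     Liminf (at x) (\<lambda>z. (g z - g x - ereal (v \<bullet> (z - x))) / ereal (norm (z - x))) \<ge> 0"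

definition limiting_subdiff :: "('a::real_inner \<Rightarrow> ereal) \<Rightarrow> 'a \<Rightarrow> 'a set" where
  "limiting_subdiff g x = {v. \<bar>g x\<bar> \<noteq> \<infinity> \<and>
     (\<exists>xs vs. xs \<longlonglongrightarrow> x \<and> (\<lambda>t. g (xs t)) \<longlonglongrightarrow> g x \<and> vs \<longlonglongrightarrow> v \<and>
        (\<forall>t. frechet_subgrad g (xs t) (vs t)))}"

definition merit :: "('a::real_inner \<Rightarrow> real) \<Rightarrow> ('a \<Rightarrow> ereal) \<Rightarrow> real \<Rightarrow> 'a \<Rightarrow> 'a \<Rightarrow> 'a \<Rightarrow> ereal" where
  "merit f g \<gamma> y z x = ereal (f y) + g z +
     ereal (- (3 / (2 * \<gamma>)) * (norm (y - z))\<^sup>2 + (1 / \<gamma>) * ((x - y) \<bullet> (z - y)))"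

end

theory Submission
  imports Defs
begin
lemma strong_ineq:
  fixes f :: "'a::euclidean_space \<Rightarrow> real" and gf :: "'a \<Rightarrow> 'a"
  assumes grad: "\<And>u. (f has_derivative (\<lambda>h. gf u \<bullet> h)) (at u)"
    and strong_convex: "convex_on UNIV (\<lambda>u. f u - \<sigma> / 2 * (norm u)\<^sup>2)"
  shows "f b \<ge> f a + gf a \<bullet> (b - a) + \<sigma>/2 * (norm (b - a))\<^sup>2"
proof -
  define h where "h = (\<lambda>u. f u - \<sigma> / 2 * (norm u)\<^sup>2)"
  define \<phi> where "\<phi> = (\<lambda>s::real. h (a + s *\<^sub>R (b - a)))"
  have cvx: "convex_on UNIV \<phi>"
  proof (rule convex_onI)
    fix t x y :: real assume t: "0 < t" "t < 1"
    have e: "a + ((1 - t) *\<^sub>R x + t *\<^sub>R y) *\<^sub>R (b - a) = (1-t) *\<^sub>R (a + x *\<^sub>R (b - a)) + t *\<^sub>R (a + y *\<^sub>R (b - a))"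
      by (simp add: algebra_simps)
    show "\<phi> ((1 - t) *\<^sub>R x + t *\<^sub>R y) \<le> (1 - t) * \<phi> x + t * \<phi> y"
      unfolding \<phi>_def e using convex_onD[OF strong_convex[folded h_def], of t] t by simp
  qed simp
  have hd: "(h has_derivative (\<lambda>k. (gf u - \<sigma> *\<^sub>R u) \<bullet> k)) (at u)" for u
  proof -
    have "((\<lambda>u. f u - \<sigma> / 2 * (u \<bullet> u)) has_derivative (\<lambda>k. gf u \<bullet> k - \<sigma> / 2 * (u \<bullet> k + k \<bullet> u))) (at u)"
      by (intro derivative_eq_intros) (auto intro: grad)
    then show ?thesis unfolding h_def power2_norm_eq_inner
      by (simp add: inner_commute algebra_simps inner_diff_left)
  qed
  have pd: "(\<phi> has_field_derivative ((gf a - \<sigma> *\<^sub>R a) \<bullet> (b - a))) (at 0)"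
  proof -
    have "(\<phi> has_derivative (\<lambda>s. (gf (a + 0 *\<^sub>R (b - a)) - \<sigma> *\<^sub>R (a + 0 *\<^sub>R (b - a))) \<bullet> (s *\<^sub>R (b - a)))) (at 0)"
      unfolding \<phi>_def
      by (rule has_derivative_compose[OF _ hd, where f="\<lambda>s. a + s *\<^sub>R (b - a)"]) (auto intro!: derivative_eq_intros)
    then show ?thesis
      by (simp add: has_field_derivative_def mult.commute[of _ "(gf a - \<sigma> *\<^sub>R a) \<bullet> (b - a)"])
  qed
  have "\<phi> 1 - \<phi> 0 \<ge> ((gf a - \<sigma> *\<^sub>R a) \<bullet> (b - a)) * (1 - 0)"
    by (rule convex_on_imp_above_tangent[OF cvx]) (auto simp: pd)
  then have "h b - h a \<ge> (gf a - \<sigma> *\<^sub>R a) \<bullet> (b - a)" by (simp add: \<phi>_def)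
  then show ?thesis unfolding h_def power2_norm_eq_inner
    by (simp add: algebra_simps inner_diff_left inner_diff_right inner_commute)
qed

lemma opt_cond:
  fixes f :: "'a::euclidean_space \<Rightarrow> real" and gf :: "'a \<Rightarrow> 'a"
  assumes grad: "\<And>u. (f has_derivative (\<lambda>h. gf u \<bullet> h)) (at u)"
    and gamma_pos: "\<gamma> > 0"
    and min: "\<And>u. f a + (norm (a - c))\<^sup>2 / (2 * \<gamma>) \<le> f u + (norm (u - c))\<^sup>2 / (2 * \<gamma>)"
  shows "c = a + \<gamma> *\<^sub>R gf a"
proof -
  define \<phi> where "\<phi> = (\<lambda>u. f u + ((u - c) \<bullet> (u - c)) / (2 * \<gamma>))"
  have d: "(\<phi> has_derivative (\<lambda>h. gf a \<bullet> h + (h \<bullet> (a - c) + (a - c) \<bullet> h) / (2 * \<gamma>))) (at a)"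
    unfolding \<phi>_def by (intro derivative_eq_intros) (use gamma_pos in \<open>auto intro: grad\<close>)
  have "(\<lambda>h. gf a \<bullet> h + (h \<bullet> (a - c) + (a - c) \<bullet> h) / (2 * \<gamma>)) = (\<lambda>v. 0)"
    by (rule differential_zero_maxmin[OF _ _ d, of UNIV]) (use min gamma_pos in \<open>auto simp: \<phi>_def power2_norm_eq_inner\<close>)
  then have H: "\<forall>h. (2 * \<gamma>) * (gf a \<bullet> h) + (h \<bullet> (a - c) + (a - c) \<bullet> h) = 0"
    using gamma_pos by (auto simp: fun_eq_iff field_simps)
  have "\<forall>h. (\<gamma> *\<^sub>R gf a + (a - c)) \<bullet> h = 0"
  proof
    fix h
    from H[rule_format, of h] show "(\<gamma> *\<^sub>R gf a + (a - c)) \<bullet> h = 0"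
      by (simp add: inner_add_left inner_commute algebra_simps)
  qed
  then have "\<gamma> *\<^sub>R gf a + (a - c) = 0" by (metis inner_eq_zero_iff)
  then show ?thesis by (simp add: algebra_simps)
qed

lemma lsc_event:
  fixes g :: "'a::real_inner \<Rightarrow> ereal"
  assumes "lsc_fun g" "c < g w" "X \<longlonglongrightarrow> w"
  shows "eventually (\<lambda>k. c < g (X k)) sequentially"
proof -
  have "c < Liminf (at w) g" using assms(1,2) unfolding lsc_fun_def by (metis order_less_le_trans)
  then have "eventually (\<lambda>v. c < g v) (at w)" using le_Liminf_iff[of "Liminf (at w) g" "at w" g] by auto
  then obtain d where d: "d > 0" "\<And>v. v \<noteq> w \<Longrightarrow> dist v w < d \<Longrightarrow> c < g v"
    unfolding eventually_at by auto
  have "eventually (\<lambda>v. c < g v) (nhds w)"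
    unfolding eventually_nhds_metric using d assms(2) by metis
  then show ?thesis using assms(3) unfolding tendsto_def  
    using filterlim_iff assms(3) by blast
qed

lemma frechet_prox:
  fixes g :: "'a::real_inner \<Rightarrow> ereal"
  assumes fin: "\<bar>g z\<bar> \<noteq> \<infinity>" and gp: "\<gamma> > 0"
    and min: "\<And>u. g z + ereal ((norm (w - z))\<^sup>2 / (2 * \<gamma>)) \<le> g u + ereal ((norm (w - u))\<^sup>2 / (2 * \<gamma>))"
  shows "frechet_subgrad g z ((1/\<gamma>) *\<^sub>R (w - z))"
proof -
  define v where "v = (1/\<gamma>) *\<^sub>R (w - z)"
  obtain Gz where Gz: "g z = ereal Gz" using fin by (cases "g z") auto
  have low: "ereal (- norm (u - z) / (2 * \<gamma>)) \<le> (g u - g z - ereal (v \<bullet> (u - z))) / ereal (norm (u - z))"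
    if "u \<noteq> z" for u
  proof -
    have n: "norm (u - z) > 0" using that by simp
    show ?thesis
    proof (cases "g u")
      case PInf
      then show ?thesis using n by (simp add: Gz)
    next
      case MInf
      then show ?thesis using min[of u] by (simp add: Gz)
    next
      case (real Gu)
      have "Gz + (norm (w - z))\<^sup>2 / (2 * \<gamma>) \<le> Gu + (norm (w - u))\<^sup>2 / (2 * \<gamma>)"
        using min[of u] by (simp add: Gz real)
      moreover have "(norm (w - u))\<^sup>2 = (norm (w - z))\<^sup>2 - 2 * ((w - z) \<bullet> (u - z)) + (norm (u - z))\<^sup>2"
        unfolding power2_norm_eq_inner by (simp add: algebra_simps inner_diff_left inner_diff_right inner_commute)
      moreover have "(norm (w - u))\<^sup>2 / (2 * \<gamma>) = (norm (w - z))\<^sup>2 / (2 * \<gamma>) - ((w - z) \<bullet> (u - z)) / \<gamma> + (norm (u - z))\<^sup>2 / (2 * \<gamma>)"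
        using calculation(2) gp by (simp add: field_simps)
      moreover have "v \<bullet> (u - z) = ((w - z) \<bullet> (u - z)) / \<gamma>" by (simp add: v_def)
      ultimately have "Gu - Gz - v \<bullet> (u - z) \<ge> - (norm (u - z))\<^sup>2 / (2 * \<gamma>)"
        by simp
      then have "(Gu - Gz - v \<bullet> (u - z)) / norm (u - z) \<ge> - norm (u - z) / (2 * \<gamma>)"
        using n gp by (simp add: field_simps power2_eq_square)
      then show ?thesis using n by (simp add: real Gz)
    qed
  qed
  have "0 \<le> Liminf (at z) (\<lambda>u. (g u - g z - ereal (v \<bullet> (u - z))) / ereal (norm (u - z)))"
  proof (subst le_Liminf_iff, intro allI impI)
    fix e :: ereal assume "e < 0"
    have "\<exists>e'. e' < 0 \<and> e \<le> ereal e'" using \<open>e < 0\<close> by (cases e) (auto, rule exI[of _ "-1"], simp)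
    then obtain e' :: real where e': "e' < 0" "e \<le> ereal e'" by blast
    have "eventually (\<lambda>u. e < (g u - g z - ereal (v \<bullet> (u - z))) / ereal (norm (u - z))) (at z)"
    proof -
      have dp: "0 < - e' * \<gamma>" using e' gp by (simp add: mult_neg_pos)
      have "e < (g u - g z - ereal (v \<bullet> (u - z))) / ereal (norm (u - z))" if u: "u \<noteq> z \<and> dist u z < - e' * \<gamma>" for u
      proof -
      have h: "\<gamma> * e' < 0" using gp e' by (simp add: mult_pos_neg)
      then have "- norm (u - z) / (2 * \<gamma>) > e'" using gp e' u by (simp add: dist_norm field_simps)
      then have "e < ereal (- norm (u - z) / (2 * \<gamma>))" using e' by (metis ereal_less(2) order_le_less_trans less_ereal.simps(1))
      then show "e < (g u - g z - ereal (v \<bullet> (u - z))) / ereal (norm (u - z))"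
        using low[of u] u by (meson order_less_le_trans)
      qed
      then show ?thesis unfolding eventually_at using dp by blast
    qed
    then show "eventually (\<lambda>u. e < (g u - g z - ereal (v \<bullet> (u - z))) / ereal (norm (u - z))) (at z)" .
  qed
  then show ?thesis using fin unfolding frechet_subgrad_def v_def by simp
qed

lemma key_id:
  fixes a a0 ga ga0 :: "'a::real_inner"
  assumes gp: "\<gamma> > 0"
  defines "b0 \<equiv> (1/2) *\<^sub>R (a + a0) + (\<gamma>/2) *\<^sub>R (ga - ga0)"
  shows "(norm (2 *\<^sub>R a - (a + \<gamma> *\<^sub>R ga) - b0))\<^sup>2 / (2 * \<gamma>) - \<gamma>/2 * (norm ga)\<^sup>2
     - (- (3 / (2 * \<gamma>)) * (norm (a0 - b0))\<^sup>2 + (1 / \<gamma>) * (((a + \<gamma> *\<^sub>R ga) - a0) \<bullet> (b0 - a0)))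
     = - (ga \<bullet> (a - a0)) + \<gamma>/2 * (norm (ga - ga0))\<^sup>2"
  using gp unfolding b0_def power2_norm_eq_inner
  by (simp add: inner_add_left inner_add_right inner_diff_left inner_diff_right inner_commute field_simps)

lemma id1:
  fixes a b x :: "'a::real_inner"
  assumes gp: "\<gamma> > 0"
  shows "- (3 / (2 * \<gamma>)) * (norm (a - b))\<^sup>2 + (1 / \<gamma>) * ((x + 2 *\<^sub>R (b - a) - a) \<bullet> (b - a))
    = (norm (2 *\<^sub>R a - x - b))\<^sup>2 / (2 * \<gamma>) - (norm (a - x))\<^sup>2 / (2 * \<gamma>)"
  using gp unfolding power2_norm_eq_inner
  by (simp add: inner_add_left inner_add_right inner_diff_left inner_diff_right inner_commute field_simps)

theorem theorem1:
  fixes f :: "'a::euclidean_space \<Rightarrow> real" and gf :: "'a \<Rightarrow> 'a"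
    and g :: "'a \<Rightarrow> ereal" and \<sigma> L \<gamma> :: real
    and y z x :: "nat \<Rightarrow> 'a"
  assumes grad: "\<And>u. (f has_derivative (\<lambda>h. gf u \<bullet> h)) (at u)"
    and sigma_pos: "\<sigma> > 0"
    and strong_convex: "convex_on UNIV (\<lambda>u. f u - \<sigma> / 2 * (norm u)\<^sup>2)"
    and L_pos: "L > 0"
    and lipschitz: "\<And>u v. norm (gf u - gf v) \<le> L * norm (u - v)"
    and g_proper: "proper_fun g"
    and g_lsc: "lsc_fun g"
    and prox_nonempty: "\<And>w. \<exists>u. \<forall>v. ereal \<gamma> * g u + ereal ((norm (u - w))\<^sup>2 / 2)
                                   \<le> ereal \<gamma> * g v + ereal ((norm (v - w))\<^sup>2 / 2)"
    and sigma_L: "3 * \<sigma> > 2 * L"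
    and gamma_pos: "\<gamma> > 0"
    and gamma_bound: "\<gamma> < (3 * \<sigma> - 2 * L) / L\<^sup>2"
    and y_step: "\<And>t u. f (y (Suc t)) + (norm (y (Suc t) - x t))\<^sup>2 / (2 * \<gamma>)
                        \<le> f u + (norm (u - x t))\<^sup>2 / (2 * \<gamma>)"
    and z_step: "\<And>t u. g (z (Suc t)) + ereal ((norm (2 *\<^sub>R y (Suc t) - x t - z (Suc t)))\<^sup>2 / (2 * \<gamma>))
                        \<le> g u + ereal ((norm (2 *\<^sub>R y (Suc t) - x t - u))\<^sup>2 / (2 * \<gamma>))"
    and x_step: "\<And>t. x (Suc t) = x t + 2 *\<^sub>R (z (Suc t) - y (Suc t))"
  shows "(\<forall>t\<ge>1. merit f g \<gamma> (y (Suc t)) (z (Suc t)) (x (Suc t)) \<le> merit f g \<gamma> (y t) (z t) (x t))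
    \<and> (\<forall>ys zs xs. (\<exists>r. strict_mono r \<and> (\<lambda>k. (y (r k), z (r k), x (r k))) \<longlonglongrightarrow> (ys, zs, xs)) \<longrightarrow>
          (\<lambda>t. norm (x (Suc t) - x t)) \<longlonglongrightarrow> 0
        \<and> (\<lambda>t. 2 * norm (z (Suc t) - y (Suc t))) \<longlonglongrightarrow> 0
        \<and> zs = ys
        \<and> 0 \<in> (\<lambda>v. gf zs + v) ` limiting_subdiff g zs)"
proof -
  have sL: "\<sigma> \<le> L"
  proof -
    obtain e :: 'a where e: "e \<in> Basis" using nonempty_Basis by blast
    have ne: "norm e = 1" using e by simp
    have i1: "f e \<ge> f 0 + gf 0 \<bullet> (e - 0) + \<sigma>/2 * (norm (e - 0))\<^sup>2"
      by (rule strong_ineq[OF grad strong_convex])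
    have i2: "f 0 \<ge> f e + gf e \<bullet> (0 - e) + \<sigma>/2 * (norm (0 - e))\<^sup>2"
      by (rule strong_ineq[OF grad strong_convex])
    have "(gf e - gf 0) \<bullet> e \<ge> \<sigma>" using i1 i2 ne by (simp add: inner_diff_left)
    moreover have "(gf e - gf 0) \<bullet> e \<le> norm (gf e - gf 0) * norm e" by (rule norm_cauchy_schwarz)
    moreover have "norm (gf e - gf 0) \<le> L" using lipschitz[of e 0] ne by simp
    ultimately show ?thesis using ne by simp
  qed
  have opt: "x t = y (Suc t) + \<gamma> *\<^sub>R gf (y (Suc t))" for t
    by (rule opt_cond[OF grad gamma_pos y_step])
  obtain u0 where u0: "g u0 \<noteq> \<infinity>" using g_proper unfolding proper_fun_def by blast
  have gnm: "g u \<noteq> -\<infinity>" for u using g_proper unfolding proper_fun_def by blast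
  have zfin: "\<bar>g (z (Suc t))\<bar> \<noteq> \<infinity>" for t
  proof -
    have "g (z (Suc t)) + ereal ((norm (2 *\<^sub>R y (Suc t) - x t - z (Suc t)))\<^sup>2 / (2 * \<gamma>))
          \<le> g u0 + ereal ((norm (2 *\<^sub>R y (Suc t) - x t - u0))\<^sup>2 / (2 * \<gamma>))" by (rule z_step)
    then have "g (z (Suc t)) \<noteq> \<infinity>" using u0 gnm[of u0] by (cases "g u0") auto
    then show ?thesis using gnm by auto
  qed
  define G where "G t = real_of_ereal (g (z t))" for t
  have gG: "g (z t) = ereal (G t)" if t1: "t \<ge> 1" for t
  proof -
    obtain s where "t = Suc s" using t1 by (cases t) auto
    then show ?thesis using zfin[of s] unfolding G_def by (cases "g (z t)") auto
  qed
  define Q where "Q a b c = - (3 / (2 * \<gamma>)) * (norm (a - b))\<^sup>2 + (1 / \<gamma>) * ((c - a) \<bullet> (b - a))" for a b c :: 'a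
  define p where "p t = f (y t) + G t + Q (y t) (z t) (x t)" for t
  have mer: "merit f g \<gamma> (y t) (z t) (x t) = ereal (p t)" if "t \<ge> 1" for t
    using gG[OF that] unfolding merit_def p_def Q_def by simp
  define c where "c = (\<sigma> - \<gamma> * L\<^sup>2) / 2"
  have cpos: "c > 0"
  proof -
    have "\<gamma> * L\<^sup>2 < 3 * \<sigma> - 2 * L" using gamma_bound L_pos by (simp add: field_simps)
    then show ?thesis unfolding c_def using sL by simp
  qed
  have dec: "p (Suc t) \<le> p t - c * (norm (y (Suc t) - y t))\<^sup>2" if t1: "t \<ge> 1" for t
  proof -
    obtain s where ts: "t = Suc s" using t1 by (cases t) auto
    define a where "a = y (Suc t)"
    define a0 where "a0 = y t"
    define ga where "ga = gf a"
    define ga0 where "ga0 = gf a0"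
    define b where "b = z (Suc t)"
    have xt: "x t = a + \<gamma> *\<^sub>R ga" using opt[of t] unfolding a_def ga_def .
    have xs: "x s = a0 + \<gamma> *\<^sub>R ga0" using opt[of s] unfolding a0_def ga0_def ts .
    have "x t = x s + 2 *\<^sub>R (z t - a0)" using x_step[of s] unfolding a0_def ts .
    then have h: "x t - x s = 2 *\<^sub>R z t - 2 *\<^sub>R a0" by (simp add: scaleR_diff_right)
    then have "2 *\<^sub>R z t = (x t - x s) + 2 *\<^sub>R a0" by (metis diff_add_cancel)
    then have "(1/2) *\<^sub>R (2 *\<^sub>R z t) = (1/2) *\<^sub>R ((x t - x s) + 2 *\<^sub>R a0)" by simp
    then have "z t = (1/2) *\<^sub>R ((x t - x s) + 2 *\<^sub>R a0)" by simp
    also have "\<dots> = (1/2) *\<^sub>R (a + a0) + (\<gamma>/2) *\<^sub>R (ga - ga0)"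
      unfolding xt xs by (simp add: algebra_simps flip: scaleR_add_left)
    finally have zt: "z t = (1/2) *\<^sub>R (a + a0) + (\<gamma>/2) *\<^sub>R (ga - ga0)" .
    have zst: "g b + ereal ((norm (2 *\<^sub>R a - x t - b))\<^sup>2 / (2 * \<gamma>))
          \<le> g (z t) + ereal ((norm (2 *\<^sub>R a - x t - z t))\<^sup>2 / (2 * \<gamma>))"
      using z_step[of t "z t"] unfolding a_def b_def .
    then have zst': "G (Suc t) + (norm (2 *\<^sub>R a - x t - b))\<^sup>2 / (2 * \<gamma>)
          \<le> G t + (norm (2 *\<^sub>R a - x t - z t))\<^sup>2 / (2 * \<gamma>)"
      using gG[OF t1] gG[of "Suc t"] unfolding b_def by simp
    have q1: "Q a b (x (Suc t)) = (norm (2 *\<^sub>R a - x t - b))\<^sup>2 / (2 * \<gamma>) - (norm (a - x t))\<^sup>2 / (2 * \<gamma>)"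
      unfolding Q_def using id1[OF gamma_pos, of a b "x t"] x_step[of t] unfolding a_def b_def by simp
    have q2: "(norm (a - x t))\<^sup>2 / (2 * \<gamma>) = \<gamma>/2 * (norm ga)\<^sup>2"
      using gamma_pos unfolding xt by (simp add: power2_eq_square field_simps)
    have kid: "(norm (2 *\<^sub>R a - x t - z t))\<^sup>2 / (2 * \<gamma>) - \<gamma>/2 * (norm ga)\<^sup>2 - Q a0 (z t) (x t)
        = - (ga \<bullet> (a - a0)) + \<gamma>/2 * (norm (ga - ga0))\<^sup>2"
      using key_id[OF gamma_pos, of a ga a0 ga0] unfolding Q_def zt xt by simp
    have sc: "f a0 \<ge> f a + ga \<bullet> (a0 - a) + \<sigma>/2 * (norm (a0 - a))\<^sup>2"
      unfolding ga_def by (rule strong_ineq[OF grad strong_convex])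
    have "norm (ga - ga0) \<le> L * norm (a - a0)" unfolding ga_def ga0_def by (rule lipschitz)
    then have "(norm (ga - ga0))\<^sup>2 \<le> (L * norm (a - a0))\<^sup>2" by (simp add: power_mono)
    then have lp: "\<gamma>/2 * (norm (ga - ga0))\<^sup>2 \<le> \<gamma> * L\<^sup>2 / 2 * (norm (a - a0))\<^sup>2"
      using gamma_pos by (simp add: power_mult_distrib)
    have ia: "ga \<bullet> (a0 - a) = - (ga \<bullet> (a - a0))" by (simp add: inner_diff_right)
    have na: "\<sigma>/2 * (norm (a0 - a))\<^sup>2 = \<sigma>/2 * (norm (a - a0))\<^sup>2" by (simp add: norm_minus_commute)
    have cc: "c * (norm (a - a0))\<^sup>2 = \<sigma>/2 * (norm (a - a0))\<^sup>2 - \<gamma> * L\<^sup>2 / 2 * (norm (a - a0))\<^sup>2"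
      unfolding c_def by (simp add: field_simps)
    have "p (Suc t) = f a + G (Suc t) + (norm (2 *\<^sub>R a - x t - b))\<^sup>2 / (2 * \<gamma>) - \<gamma>/2 * (norm ga)\<^sup>2"
      unfolding p_def using q1 q2 unfolding a_def b_def by simp
    moreover have "p t = f a0 + G t + Q a0 (z t) (x t)" unfolding p_def a0_def ..
    ultimately show ?thesis using zst' kid sc lp ia na cc unfolding a_def a0_def by linarith
  qed
  have part1: "\<forall>t\<ge>1. merit f g \<gamma> (y (Suc t)) (z (Suc t)) (x (Suc t)) \<le> merit f g \<gamma> (y t) (z t) (x t)"
  proof (intro allI impI)
    fix t :: nat assume t: "t \<ge> 1"
    have "p (Suc t) \<le> p t" using dec[OF t] cpos[THEN less_imp_le, THEN mult_nonneg_nonneg, OF zero_le_power2[of "norm (y (Suc t) - y t)"]] by linarith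
    then show "merit f g \<gamma> (y (Suc t)) (z (Suc t)) (x (Suc t)) \<le> merit f g \<gamma> (y t) (z t) (x t)"
      using mer[OF t] mer[of "Suc t"] t by simp
  qed
  have decle: "p (Suc t) \<le> p t" if "t \<ge> 1" for t
    using dec[OF that] cpos[THEN less_imp_le, THEN mult_nonneg_nonneg, OF zero_le_power2[of "norm (y (Suc t) - y t)"]] by linarith
  have monot: "p m \<le> p t" if "t \<ge> 1" "m \<ge> t" for t m
    using that(2)
  proof (induction m rule: dec_induct)
    case base then show ?case by simp
  next
    case (step m) then show ?case using decle[of m] that(1) by simp
  qed
  have gfc: "(\<lambda>k. gf (X k)) \<longlonglongrightarrow> gf u" if X: "X \<longlonglongrightarrow> u" for X and u :: 'a
  proof -
    have "(\<lambda>k. X k - u) \<longlonglongrightarrow> 0" using X by (rule LIM_zero)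
    then have "(\<lambda>k. norm (X k - u)) \<longlonglongrightarrow> 0" by (rule tendsto_norm_zero)
    then have "(\<lambda>k. L * norm (X k - u)) \<longlonglongrightarrow> 0" by (rule tendsto_mult_right_zero)
    then have "(\<lambda>k. gf (X k) - gf u) \<longlonglongrightarrow> 0"
      by (rule Lim_null_comparison[rotated]) (simp add: lipschitz)
    then show ?thesis by (rule LIM_zero_cancel)
  qed
  have fc: "(\<lambda>k. f (X k)) \<longlonglongrightarrow> f u" if X: "X \<longlonglongrightarrow> u" for X and u :: 'a
  proof -
    have "isCont f u" using has_derivative_continuous[OF grad[of u]] .
    then show ?thesis using X by (rule isCont_tendsto_compose)
  qed
  show ?thesis
  proof (intro conjI part1 allI impI)
    fix ys zs xs
    assume "\<exists>r. strict_mono r \<and> (\<lambda>k. (y (r k), z (r k), x (r k))) \<longlonglongrightarrow> (ys, zs, xs)"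
    then obtain r where r: "strict_mono r" and conv: "(\<lambda>k. (y (r k), z (r k), x (r k))) \<longlonglongrightarrow> (ys, zs, xs)"
      by blast
    have yr: "(\<lambda>k. y (r k)) \<longlonglongrightarrow> ys" using tendsto_fst[OF conv] by simp
    have zr: "(\<lambda>k. z (r k)) \<longlonglongrightarrow> zs" using tendsto_fst[OF tendsto_snd[OF conv]] by simp
    have xr: "(\<lambda>k. x (r k)) \<longlonglongrightarrow> xs" using tendsto_snd[OF tendsto_snd[OF conv]] by simp
    have rge: "k \<le> r k" for k using seq_suble[OF r] .
    have "\<exists>c0. ereal c0 < g zs" using gnm[of zs] proof (cases "g zs")
      case (real rr) then show ?thesis by (intro exI[of _ "rr - 1"]) simp
    next
      case PInf then show ?thesis by (intro exI[of _ 0]) simp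
    qed simp
    then obtain c0 where c0: "ereal c0 < g zs" by blast
    have "eventually (\<lambda>k. ereal c0 < g (z (r k))) sequentially"
      by (rule lsc_event[OF g_lsc c0 zr])
    then obtain N where N: "\<And>k. k \<ge> N \<Longrightarrow> ereal c0 < g (z (r k))"
      unfolding eventually_sequentially by blast
    have hc: "(\<lambda>k. f (y (r k)) + Q (y (r k)) (z (r k)) (x (r k))) \<longlonglongrightarrow> f ys + Q ys zs xs"
      unfolding Q_def by (intro tendsto_intros fc yr zr xr)
    obtain K where K: "\<forall>k. norm (f (y (r k)) + Q (y (r k)) (z (r k)) (x (r k))) \<le> K"
      using BseqD[OF convergent_imp_Bseq[OF convergentI[OF hc]]] by blast
    have lowb: "p t \<ge> c0 - K" if t1: "t \<ge> 1" for t
    proof -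
      define k where "k = t + N"
      have rk: "r k \<ge> t" "r k \<ge> 1" "k \<ge> N" using rge[of k] t1 unfolding k_def by auto
      have "ereal c0 < ereal (G (r k))" using N[OF rk(3)] gG[OF rk(2)] by simp
      then have "c0 < G (r k)" by simp
      moreover have "- K \<le> f (y (r k)) + Q (y (r k)) (z (r k)) (x (r k))" using K[rule_format, of k] by simp
      ultimately have "c0 - K \<le> p (r k)" unfolding p_def by simp
      also have "\<dots> \<le> p t" using monot[OF t1 rk(1)] .
      finally show ?thesis .
    qed
    define w where "w i = norm (y (Suc (Suc i)) - y (Suc i))" for i
    have sumb: "(\<Sum>i<n. c * (w i)\<^sup>2) \<le> p 1 - p (Suc n)" for n
    proof (induction n)
      case 0 then show ?case by simp
    next
      case (Suc n)
      have "p (Suc (Suc n)) \<le> p (Suc n) - c * (w n)\<^sup>2" using dec[of "Suc n"] unfolding w_def by simp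
      then show ?case using Suc by simp
    qed
    have "summable (\<lambda>i. c * (w i)\<^sup>2)"
    proof (rule summableI_nonneg_bounded)
      show "0 \<le> c * (w n)\<^sup>2" for n using cpos by simp
      show "(\<Sum>i<n. c * (w i)\<^sup>2) \<le> p 1 - (c0 - K)" for n using sumb[of n] lowb[of "Suc n"] by simp
    qed
    then have "(\<lambda>i. c * (w i)\<^sup>2) \<longlonglongrightarrow> 0" by (rule summable_LIMSEQ_zero)
    then have "(\<lambda>i. (1/c) * (c * (w i)\<^sup>2)) \<longlonglongrightarrow> 0" by (rule tendsto_mult_right_zero)
    then have "(\<lambda>i. (w i)\<^sup>2) \<longlonglongrightarrow> 0" using cpos by simp
    then have "(\<lambda>i. sqrt ((w i)\<^sup>2)) \<longlonglongrightarrow> sqrt 0" by (rule tendsto_real_sqrt)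
    then have w0: "w \<longlonglongrightarrow> 0" unfolding w_def[abs_def] by simp
    have zyb: "norm (z (Suc i) - y (Suc i)) \<le> (1 + \<gamma> * L) / 2 * w i" for i
    proof -
      have "2 *\<^sub>R (z (Suc i) - y (Suc i)) = x (Suc i) - x i" using x_step[of i] by simp
      also have "\<dots> = (y (Suc (Suc i)) - y (Suc i)) + \<gamma> *\<^sub>R (gf (y (Suc (Suc i))) - gf (y (Suc i)))"
        using opt[of i] opt[of "Suc i"] by (simp add: algebra_simps)
      finally have e: "2 *\<^sub>R (z (Suc i) - y (Suc i)) = (y (Suc (Suc i)) - y (Suc i)) + \<gamma> *\<^sub>R (gf (y (Suc (Suc i))) - gf (y (Suc i)))" .
      have "2 * norm (z (Suc i) - y (Suc i)) = norm ((y (Suc (Suc i)) - y (Suc i)) + \<gamma> *\<^sub>R (gf (y (Suc (Suc i))) - gf (y (Suc i))))"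
        using arg_cong[OF e, of norm] by simp
      also have "\<dots> \<le> w i + \<gamma> * norm (gf (y (Suc (Suc i))) - gf (y (Suc i)))"
        unfolding w_def using norm_triangle_ineq gamma_pos by (simp add: norm_triangle_le)
      also have "\<dots> \<le> w i + \<gamma> * (L * w i)"
        unfolding w_def using lipschitz gamma_pos by (simp add: mult_left_mono)
      finally show ?thesis by (simp add: field_simps)
    qed
    have zy0: "(\<lambda>i. z (Suc i) - y (Suc i)) \<longlonglongrightarrow> 0"
    proof (rule Lim_null_comparison)
      show "eventually (\<lambda>i. norm (z (Suc i) - y (Suc i)) \<le> (1 + \<gamma> * L) / 2 * w i) sequentially"
        using zyb by simp
      show "(\<lambda>i. (1 + \<gamma> * L) / 2 * w i) \<longlonglongrightarrow> 0" using w0 by (rule tendsto_mult_right_zero)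
    qed
    then have nzy0: "(\<lambda>i. norm (z (Suc i) - y (Suc i))) \<longlonglongrightarrow> 0" by (rule tendsto_norm_zero)
    show "(\<lambda>t. 2 * norm (z (Suc t) - y (Suc t))) \<longlonglongrightarrow> 0" using nzy0 by (rule tendsto_mult_right_zero)
    then show "(\<lambda>t. norm (x (Suc t) - x t)) \<longlonglongrightarrow> 0" using x_step by simp
    have "(\<lambda>t. z t - y t) \<longlonglongrightarrow> 0" using zy0 by (rule LIMSEQ_imp_Suc)
    then have "((\<lambda>t. z t - y t) \<circ> r) \<longlonglongrightarrow> 0" using r by (rule LIMSEQ_subseq_LIMSEQ)
    moreover have "((\<lambda>t. z t - y t) \<circ> r) \<longlonglongrightarrow> zs - ys" unfolding comp_def using zr yr by (rule tendsto_diff)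
    ultimately have "zs - ys = 0" using LIMSEQ_unique by blast
    then show zsys: "zs = ys" by simp
    show "0 \<in> (\<lambda>v. gf zs + v) ` limiting_subdiff g zs"
    proof -
      define sk where "sk k = r (Suc k) - 1" for k
      have sks: "Suc (sk k) = r (Suc k)" for k using rge[of "Suc k"] unfolding sk_def by simp
      define yy where "yy k = y (r (Suc k))" for k
      define zz where "zz k = z (r (Suc k))" for k
      define ww where "ww k = yy k - \<gamma> *\<^sub>R gf (yy k)" for k
      have yy: "yy \<longlonglongrightarrow> zs" using LIMSEQ_Suc[OF yr] zsys unfolding yy_def by simp
      have zz: "zz \<longlonglongrightarrow> zs" using LIMSEQ_Suc[OF zr] unfolding zz_def by simp
      have ww: "ww \<longlonglongrightarrow> zs - \<gamma> *\<^sub>R gf zs" unfolding ww_def by (intro tendsto_diff tendsto_scaleR tendsto_const yy gfc[OF yy])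
      have wx: "2 *\<^sub>R y (r (Suc k)) - x (sk k) = ww k" for k
        using opt[of "sk k"] unfolding ww_def yy_def sks by (simp add: algebra_simps scaleR_2)
      have zmin: "g (zz k) + ereal ((norm (ww k - zz k))\<^sup>2 / (2 * \<gamma>)) \<le> g u + ereal ((norm (ww k - u))\<^sup>2 / (2 * \<gamma>))" for k u
        using z_step[of "sk k" u] unfolding wx sks zz_def .
      have zzfin: "g (zz k) = ereal (G (r (Suc k)))" for k unfolding zz_def using gG[of "r (Suc k)"] rge[of "Suc k"] by simp
      have fre: "frechet_subgrad g (zz k) ((1/\<gamma>) *\<^sub>R (ww k - zz k))" for k
        by (rule frechet_prox[OF _ gamma_pos zmin]) (simp add: zzfin)
      have vs: "(\<lambda>k. (1/\<gamma>) *\<^sub>R (ww k - zz k)) \<longlonglongrightarrow> (1/\<gamma>) *\<^sub>R ((zs - \<gamma> *\<^sub>R gf zs) - zs)"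
        by (intro tendsto_scaleR tendsto_const tendsto_diff ww zz)
      have vs': "(1/\<gamma>) *\<^sub>R ((zs - \<gamma> *\<^sub>R gf zs) - zs) = - gf zs" using gamma_pos by simp
      obtain U0 where U0: "g u0 = ereal U0" using u0 gnm[of u0] by (cases "g u0") auto
      have q0c: "(\<lambda>k. ((norm (ww k - u0))\<^sup>2 - (norm (ww k - zz k))\<^sup>2) / (2 * \<gamma>)) \<longlonglongrightarrow>
                  ((norm ((zs - \<gamma> *\<^sub>R gf zs) - u0))\<^sup>2 - (norm ((zs - \<gamma> *\<^sub>R gf zs) - zs))\<^sup>2) / (2 * \<gamma>)"
        by (intro tendsto_intros ww zz) (use gamma_pos in simp)
      obtain K0 where K0: "\<forall>k. norm (((norm (ww k - u0))\<^sup>2 - (norm (ww k - zz k))\<^sup>2) / (2 * \<gamma>)) \<le> K0"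
        using BseqD[OF convergent_imp_Bseq[OF convergentI[OF q0c]]] by blast
      have ub: "G (r (Suc k)) \<le> U0 + K0" for k
      proof -
        have "G (r (Suc k)) + (norm (ww k - zz k))\<^sup>2 / (2 * \<gamma>) \<le> U0 + (norm (ww k - u0))\<^sup>2 / (2 * \<gamma>)"
          using zmin[of k u0] by (simp add: zzfin U0)
        moreover have "((norm (ww k - u0))\<^sup>2 - (norm (ww k - zz k))\<^sup>2) / (2 * \<gamma>) \<le> K0"
          using K0[rule_format, of k] abs_ge_self[of "((norm (ww k - u0))\<^sup>2 - (norm (ww k - zz k))\<^sup>2) / (2 * \<gamma>)"] unfolding real_norm_def by linarith
        ultimately show ?thesis by (simp add: diff_divide_distrib)
      qed
      have gzs_fin: "g zs \<noteq> \<infinity>"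
      proof
        assume "g zs = \<infinity>"
        then have "ereal (U0 + K0) < g zs" by simp
        then have "eventually (\<lambda>k. ereal (U0 + K0) < g (zz k)) sequentially" by (rule lsc_event[OF g_lsc _ zz])
        then obtain k where "ereal (U0 + K0) < g (zz k)" by (meson eventually_sequentially order_refl)
        then show False using ub[of k] by (simp add: zzfin)
      qed
      obtain Gs where Gs: "g zs = ereal Gs" using gzs_fin gnm[of zs] by (cases "g zs") auto
      have qc: "(\<lambda>k. ((norm (ww k - zs))\<^sup>2 - (norm (ww k - zz k))\<^sup>2) / (2 * \<gamma>)) \<longlonglongrightarrow>
                  ((norm ((zs - \<gamma> *\<^sub>R gf zs) - zs))\<^sup>2 - (norm ((zs - \<gamma> *\<^sub>R gf zs) - zs))\<^sup>2) / (2 * \<gamma>)"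
        by (intro tendsto_intros ww zz) (use gamma_pos in simp)
      then have qc0: "(\<lambda>k. ((norm (ww k - zs))\<^sup>2 - (norm (ww k - zz k))\<^sup>2) / (2 * \<gamma>)) \<longlonglongrightarrow> 0" by simp
      have ub2: "G (r (Suc k)) \<le> Gs + ((norm (ww k - zs))\<^sup>2 - (norm (ww k - zz k))\<^sup>2) / (2 * \<gamma>)" for k
      proof -
        have "G (r (Suc k)) + (norm (ww k - zz k))\<^sup>2 / (2 * \<gamma>) \<le> Gs + (norm (ww k - zs))\<^sup>2 / (2 * \<gamma>)"
          using zmin[of k zs] by (simp add: zzfin Gs)
        then show ?thesis by (simp add: diff_divide_distrib)
      qed
      have Gc: "(\<lambda>k. G (r (Suc k))) \<longlonglongrightarrow> Gs"
      proof (rule tendstoI)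
        fix e :: real assume e: "e > 0"
        have "ereal (Gs - e) < g zs" using e Gs by simp
        then have ev1: "eventually (\<lambda>k. ereal (Gs - e) < g (zz k)) sequentially" by (rule lsc_event[OF g_lsc _ zz])
        have ev2: "eventually (\<lambda>k. ((norm (ww k - zs))\<^sup>2 - (norm (ww k - zz k))\<^sup>2) / (2 * \<gamma>) < e) sequentially"
          using order_tendstoD(2)[OF qc0 e] .
        show "eventually (\<lambda>k. dist (G (r (Suc k))) Gs < e) sequentially"
          using ev1 ev2
        proof eventually_elim
          case (elim k)
          then show ?case using ub2[of k] by (simp add: zzfin dist_real_def abs_less_iff)
        qed
      qed
      have gzz: "(\<lambda>k. g (zz k)) \<longlonglongrightarrow> g zs" unfolding zzfin Gs using Gc by (rule tendsto_ereal)
      have "- gf zs \<in> limiting_subdiff g zs"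
        unfolding limiting_subdiff_def mem_Collect_eq
      proof (intro conjI exI)
        show "\<bar>g zs\<bar> \<noteq> \<infinity>" using gzs_fin gnm[of zs] by (cases "g zs") auto
      qed (use zz gzz vs[unfolded vs'] fre in auto)
      then show ?thesis by (intro image_eqI[of _ _ "- gf zs"]) simp_all
    qed
  qed
qed

end
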